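(* Let $C_2$ be the cyclic group of order $2$. For every $n\ge1$, the $(C_2,* )$-graded $n$-codimension of $M_2(\mathbb{C})$ equipped with the $C_2$-crossed-product grading and the transpose involution is $$c^{C_2}_n=4^n-2^n+1.$$ In particular $c^{C_2}_n\sim2^{2n}$ as $n\to\infty$.
   Context: Let $G=C_2=\{e,\sigma\}$. Index rows/columns of $2\times2$ matrices by $G$, let $E_{a,b}$ be matrix units, $P_g=\sum_{h\in G}E_{h,hg}$, and $M_2(\mathbb{C})_g=\{DP_g: D\text{ diagonal}\}$ (so the $e$-component is the diagonal matrices and the $\sigma$-component the off-diagonal ones); the involution $*$ is transpose. $F=\mathbb{Q}\{x_{i,g},x^*_{i,g}: i\ge1,g\in G\}$ is the free associative algebra; $I(G,* )$ is the set of $f\in F$ vanishing under every substitution $x_{i,g}\mapsto A_{i,g}\in M_2(\mathbb{C})_g$, $x^*_{i,g}\mapsto A_{i,g}^T$. $P^G_n$ is the $\mathbb{Q}$-span of the monomials $x^{\epsilon_1}_{\tau(1),h_1}\cdots x^{\epsilon_n}_{\tau(n),h_n}$ with $\tau\in S_n$, $h_i\in G$, $\epsilon_i\in\{\text{nothing},*\}$, and $c^G_n=\dim_{\mathbb{Q}}P^G_n/(P^G_n\cap I(G,* ))$. *)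

theory Defs
  imports "HOL-Analysis.Analysis" "HOL-Library.Landau_Symbols"
begin

text \<open>The group G = C_2 is modelled by bool: e = False, sigma = True, product = xor.
  2x2 matrices with rows/columns indexed by G are complex^bool^bool.\<close>

definition c2mult :: "bool \<Rightarrow> bool \<Rightarrow> bool" where
  "c2mult h g = (h \<noteq> g)"

definition Pg :: "bool \<Rightarrow> complex^bool^bool" where
  "Pg g = (\<chi> a b. if b = c2mult a g then 1 else 0)"

definition Mgr :: "bool \<Rightarrow> (complex^bool^bool) set" where
  "Mgr g = {D ** Pg g | D. \<forall>a b. a \<noteq> b \<longrightarrow> D $ a $ b = 0}"

text \<open>Letters of the free algebra: (i, g, star) stands for x_{i,g} (star = False)
  or x^*_{i,g} (star = True). Monomials are words (lists of letters).\<close>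
type_synonym letter = "nat \<times> bool \<times> bool"

definition MonP :: "nat \<Rightarrow> letter list set" where
  "MonP n = {w. length w = n \<and> set (map fst w) = {1..n}}"

text \<open>Elements of P^G_n: Q-linear combinations of such monomials (coefficient functions).\<close>
definition PG :: "nat \<Rightarrow> (letter list \<Rightarrow> rat) set" where
  "PG n = {f. \<forall>w. f w \<noteq> 0 \<longrightarrow> w \<in> MonP n}"

definition graded_subst :: "(nat \<Rightarrow> bool \<Rightarrow> complex^bool^bool) \<Rightarrow> bool" where
  "graded_subst A = (\<forall>i g. A i g \<in> Mgr g)"

definition eval_word :: "(nat \<Rightarrow> bool \<Rightarrow> complex^bool^bool) \<Rightarrow> letter list \<Rightarrow> complex^bool^bool" where
  "eval_word A w = foldr (\<lambda>(i, g, s) M. (if s then transpose (A i g) else A i g) ** M) w (mat 1)"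

definition eval_poly :: "nat \<Rightarrow> (nat \<Rightarrow> bool \<Rightarrow> complex^bool^bool) \<Rightarrow> (letter list \<Rightarrow> rat) \<Rightarrow> complex^bool^bool" where
  "eval_poly n A f = (\<chi> a b. \<Sum>w\<in>MonP n. of_rat (f w) * (eval_word A w) $ a $ b)"

definition is_identity :: "nat \<Rightarrow> (letter list \<Rightarrow> rat) \<Rightarrow> bool" where
  "is_identity n f = (\<forall>A. graded_subst A \<longrightarrow> eval_poly n A f = 0)"

definition indep_mod_id :: "nat \<Rightarrow> (letter list \<Rightarrow> rat) list \<Rightarrow> bool" where
  "indep_mod_id n fs = (\<forall>c :: nat \<Rightarrow> rat.
      is_identity n (\<lambda>w. \<Sum>j<length fs. c j * (fs ! j) w) \<longrightarrow> (\<forall>j<length fs. c j = 0))"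

text \<open>c^G_n = dim_Q P^G_n / (P^G_n \<inter> I(G,*)): maximal size of a family in P^G_n
  linearly independent modulo the identities.\<close>
definition codimG :: "nat \<Rightarrow> nat" where
  "codimG n = (GREATEST k. \<exists>fs. length fs = k \<and> set fs \<subseteq> PG n \<and> indep_mod_id n fs)"

end

theory Submission
  imports Defs "HOL-Library.Function_Algebras"
begin


lemma sum_UNIV_bool: "(\<Sum>k\<in>(UNIV::bool set). f k) = f False + f True"
  by (simp add: UNIV_bool)

lemma Mgr_zero_entry:
  assumes "X \<in> Mgr g" "b \<noteq> (a \<noteq> g)"
  shows "X $ a $ b = 0"
proof -
  obtain D where D: "X = D ** Pg g" "\<forall>a b. a \<noteq> b \<longrightarrow> D $ a $ b = 0"
    using assms(1) unfolding Mgr_def by auto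
  have z: "D $ True $ False = 0" "D $ False $ True = 0" using D(2)[rule_format, of True False] D(2)[rule_format, of False True] by auto
  show ?thesis using assms(2) unfolding D(1)
    by (cases a; cases b; cases g) (auto simp: z matrix_matrix_mult_def sum_UNIV_bool Pg_def c2mult_def)
qed

lemma single_in_Mgr:
  "(\<chi> a b. if a = p \<and> b = (p \<noteq> g) then (1::complex) else 0) \<in> Mgr g"
proof -
  let ?D = "(\<chi> a b. if a = p \<and> b = p then (1::complex) else 0)"
  have "(\<chi> a b. if a = p \<and> b = (p \<noteq> g) then (1::complex) else 0) = ?D ** Pg g"
    by (auto simp: vec_eq_iff matrix_matrix_mult_def sum_UNIV_bool Pg_def c2mult_def)
  moreover have "\<forall>a b. a \<noteq> b \<longrightarrow> ?D $ a $ b = 0" by auto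
  ultimately show ?thesis unfolding Mgr_def by blast
qed

lemma zero_in_Mgr: "(0::complex^bool^bool) \<in> Mgr g"
proof -
  have "(0::complex^bool^bool) = 0 ** Pg g"
    by (auto simp: vec_eq_iff matrix_matrix_mult_def)
  moreover have "\<forall>a b. a \<noteq> b \<longrightarrow> (0::complex^bool^bool) $ a $ b = 0" by auto
  ultimately show ?thesis unfolding Mgr_def by blast
qed

fun kf :: "bool \<Rightarrow> letter list \<Rightarrow> nat \<Rightarrow> bool \<times> bool" where
  "kf st [] = (\<lambda>_. undefined)"
| "kf st ((i, g, s) # w) = (kf (st \<noteq> g) w)(i := (g, st \<noteq> (g \<and> s)))"

fun par :: "letter list \<Rightarrow> bool" where
  "par [] = False"
| "par ((i, g, s) # w) = (g \<noteq> par w)"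

lemma eval_word_Cons:
  "eval_word A ((i, g, s) # w) = (if s then transpose (A i g) else A i g) ** eval_word A w"
  by (simp add: eval_word_def)

lemma eval_formula:
  assumes A: "graded_subst A"
  shows "distinct (map fst w) \<Longrightarrow> eval_word A w $ r $ c =
    (if c = (r \<noteq> par w) then (\<Prod>i\<in>set (map fst w).
        A i (fst (kf r w i)) $ snd (kf r w i) $ (snd (kf r w i) \<noteq> fst (kf r w i))) else 0)"
proof (induction w arbitrary: r)
  case Nil
  then show ?case by (auto simp: eval_word_def mat_def)
next
  case (Cons l w)
  obtain i g s where l: "l = (i, g, s)" by (cases l) auto
  have Ag: "A i g \<in> Mgr g" using A unfolding graded_subst_def by auto
  have iw: "i \<notin> set (map fst w)" and dw: "distinct (map fst w)" using Cons.prems l by auto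
  let ?M = "(if s then transpose (A i g) else A i g)"
  have z1: "?M $ r $ k = 0" if "k \<noteq> (r \<noteq> g)" for k
    using Mgr_zero_entry[OF Ag, of r k] Mgr_zero_entry[OF Ag, of k r] that
    by (cases s) (auto simp: transpose_def)
  have "eval_word A (l # w) $ r $ c = (\<Sum>k\<in>UNIV. ?M $ r $ k * eval_word A w $ k $ c)"
    by (simp add: l eval_word_Cons matrix_matrix_mult_def)
  also have "\<dots> = ?M $ r $ (r \<noteq> g) * eval_word A w $ (r \<noteq> g) $ c"
    using z1 by (cases r; cases g) (auto simp: sum_UNIV_bool)
  also have "?M $ r $ (r \<noteq> g) = A i g $ (r \<noteq> (g \<and> s)) $ ((r \<noteq> (g \<and> s)) \<noteq> g)"
    by (cases s; cases g; cases r) (auto simp: transpose_def)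
  also have "eval_word A w $ (r \<noteq> g) $ c = (if c = ((r \<noteq> g) \<noteq> par w) then (\<Prod>j\<in>set (map fst w).
        A j (fst (kf (r \<noteq> g) w j)) $ snd (kf (r \<noteq> g) w j) $ (snd (kf (r \<noteq> g) w j) \<noteq> fst (kf (r \<noteq> g) w j))) else 0)"
    using Cons.IH[OF dw] .
  also have "(\<Prod>j\<in>set (map fst w).
        A j (fst (kf (r \<noteq> g) w j)) $ snd (kf (r \<noteq> g) w j) $ (snd (kf (r \<noteq> g) w j) \<noteq> fst (kf (r \<noteq> g) w j)))
     = (\<Prod>j\<in>set (map fst w).
        A j (fst (kf r (l # w) j)) $ snd (kf r (l # w) j) $ (snd (kf r (l # w) j) \<noteq> fst (kf r (l # w) j)))"
    by (rule prod.cong) (use iw in \<open>auto simp: l\<close>)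
  finally show ?case using iw
    by (auto simp: l prod.insert)
qed

lemma kf_rel: "i \<in> set (map fst w) \<Longrightarrow> kf r w i = (fst (kf False w i), snd (kf False w i) \<noteq> r)"
proof (induction w arbitrary: r)
  case Nil then show ?case by simp
next
  case (Cons l w)
  obtain j g s where l: "l = (j, g, s)" by (cases l) auto
  show ?case
  proof (cases "i = j")
    case True then show ?thesis by (auto simp: l)
  next
    case False
    then have "i \<in> set (map fst w)" using Cons.prems l by auto
    from Cons.IH[OF this, of "r \<noteq> g"] Cons.IH[OF this, of "g"] False show ?thesis
      by (auto simp: l)
  qed
qed

lemma kf_undef: "i \<notin> set (map fst w) \<Longrightarrow> kf r w i = undefined"
  by (induction w arbitrary: r) auto

lemma par_card: "distinct (map fst w) \<Longrightarrow>
   par w = odd (card {i\<in>set (map fst w). fst (kf r w i)})"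
proof (induction w arbitrary: r)
  case Nil then show ?case by simp
next
  case (Cons l w)
  obtain j g s where l: "l = (j, g, s)" by (cases l) auto
  have jw: "j \<notin> set (map fst w)" and dw: "distinct (map fst w)" using Cons.prems l by auto
  have eq: "{i\<in>set (map fst (l # w)). fst (kf r (l # w) i)} =
     (if g then insert j {i\<in>set (map fst w). fst (kf (r \<noteq> g) w i)} else {i\<in>set (map fst w). fst (kf (r \<noteq> g) w i)})"
    using jw by (auto simp: l)
  have fin: "finite {i\<in>set (map fst w). fst (kf (r \<noteq> g) w i)}" by auto
  have pl: "par (l # w) = (g \<noteq> par w)" by (simp add: l)
  show ?case
  proof (cases g)
    case True
    have "card {i\<in>set (map fst (l # w)). fst (kf r (l # w) i)} = Suc (card {i\<in>set (map fst w). fst (kf (r \<noteq> g) w i)})"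
      unfolding eq using True jw fin by simp
    then show ?thesis using Cons.IH[OF dw, of "r \<noteq> g"] True pl by simp
  next
    case False
    have "card {i\<in>set (map fst (l # w)). fst (kf r (l # w) i)} = card {i\<in>set (map fst w). fst (kf (r \<noteq> g) w i)}"
      unfolding eq using False by simp
    then show ?thesis using Cons.IH[OF dw, of "r \<noteq> g"] False pl by simp
  qed
qed

lemma kf_all_even: "distinct (map fst w) \<Longrightarrow> (\<forall>i\<in>set (map fst w). \<not> fst (kf st w i)) \<Longrightarrow>
   i \<in> set (map fst w) \<Longrightarrow> kf st w i = (False, st)"
proof (induction w arbitrary: i)
  case Nil then show ?case by simp
next
  case (Cons l w)
  obtain j g s where l: "l = (j, g, s)" by (cases l) auto
  have jw: "j \<notin> set (map fst w)" and dw: "distinct (map fst w)" using Cons.prems l by auto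
  have g: "\<not> g" using Cons.prems(2) l by auto
  have hw: "\<forall>i\<in>set (map fst w). \<not> fst (kf st w i)"
  proof
    fix i assume "i \<in> set (map fst w)"
    then show "\<not> fst (kf st w i)" using Cons.prems(2) jw g l by (auto split: if_splits)
  qed
  show ?case using Cons.IH[OF dw hw] Cons.prems(3) g by (auto simp: l)
qed



definition Keys :: "nat \<Rightarrow> (nat \<Rightarrow> bool \<times> bool) set" where
  "Keys n = (PiE {1..n} (\<lambda>_. UNIV)) \<inter> {K. (\<exists>i\<in>{1..n}. fst (K i)) \<or> (\<forall>i\<in>{1..n}. K i = (False, False))}"

definition parK :: "nat \<Rightarrow> (nat \<Rightarrow> bool \<times> bool) \<Rightarrow> bool" where
  "parK n K = odd (card {i\<in>{1..n}. fst (K i)})"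

definition Ev :: "(nat \<Rightarrow> bool \<Rightarrow> complex^bool^bool) \<Rightarrow> nat \<Rightarrow> (nat \<Rightarrow> bool \<times> bool) \<Rightarrow> complex^bool^bool" where
  "Ev A n K = (\<chi> r c. if c = (r \<noteq> parK n K) then
      (\<Prod>i\<in>{1..n}. A i (fst (K i)) $ (snd (K i) \<noteq> r) $ ((snd (K i) \<noteq> r) \<noteq> fst (K i))) else 0)"

lemma MonP_distinct: "w \<in> MonP n \<Longrightarrow> distinct (map fst w)"
  by (rule card_distinct) (auto simp: MonP_def)

lemma MonP_set: "w \<in> MonP n \<Longrightarrow> set (map fst w) = {1..n}"
  by (auto simp: MonP_def)

lemma eval_key:
  assumes A: "graded_subst A" and w: "w \<in> MonP n"
  shows "eval_word A w = Ev A n (kf False w)"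
proof -
  have d: "distinct (map fst w)" and st: "set (map fst w) = {1..n}"
    using MonP_distinct[OF w] MonP_set[OF w] by auto
  have "eval_word A w $ r $ c = Ev A n (kf False w) $ r $ c" for r c
  proof -
    have pk: "par w = parK n (kf False w)" using par_card[OF d, of False] st by (simp add: parK_def)
    have "(\<Prod>i\<in>set (map fst w). A i (fst (kf r w i)) $ snd (kf r w i) $ (snd (kf r w i) \<noteq> fst (kf r w i)))
       = (\<Prod>i\<in>{1..n}. A i (fst (kf False w i)) $ (snd (kf False w i) \<noteq> r) $ ((snd (kf False w i) \<noteq> r) \<noteq> fst (kf False w i)))"
      unfolding st by (rule prod.cong) (use kf_rel[of _ w r] st in auto)
    note e = eval_formula[OF A d, of r c, unfolded pk this]
    show ?thesis by (simp add: Ev_def e)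
  qed
  then show ?thesis by (simp add: vec_eq_iff)
qed

lemma key_in:
  assumes w: "w \<in> MonP n"
  shows "kf False w \<in> Keys n"
proof -
  have d: "distinct (map fst w)" and st: "set (map fst w) = {1..n}"
    using MonP_distinct[OF w] MonP_set[OF w] by auto
  have "kf False w \<in> PiE {1..n} (\<lambda>_. UNIV)"
    using kf_undef[of _ w False] st by (auto simp: PiE_def extensional_def)
  moreover have "(\<exists>i\<in>{1..n}. fst (kf False w i)) \<or> (\<forall>i\<in>{1..n}. kf False w i = (False, False))"
  proof (cases "\<exists>i\<in>{1..n}. fst (kf False w i)")
    case False
    then have h: "\<forall>i\<in>set (map fst w). \<not> fst (kf False w i)" using st by auto
    show ?thesis using kf_all_even[OF d h] st by auto
  qed auto
  ultimately show ?thesis by (simp add: Keys_def)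
qed



lemma kf_append: "kf st (u @ v) j = (if j \<in> set (map fst u) then kf st u j else kf (st \<noteq> par u) v j)"
proof (induction u arbitrary: st)
  case Nil then show ?case by simp
next
  case (Cons l u)
  obtain i g s where l: "l = (i, g, s)" by (cases l) auto
  show ?case using Cons.IH[of "st \<noteq> g"] by (cases st; cases g; cases "par u") (auto simp: l)
qed

definition ev0 :: "nat \<Rightarrow> letter" where "ev0 i = (i, False, False)"

lemma fst_ev0[simp]: "fst (ev0 x) = x" by (simp add: ev0_def)

lemma kf_ev0: "kf st (map ev0 xs) j = (if j \<in> set xs then (False, st) else undefined)"
  by (induction xs) (auto simp: ev0_def)

lemma par_ev0: "par (map ev0 xs) = False"
  by (induction xs) (auto simp: ev0_def)

fun build :: "(nat \<Rightarrow> bool \<times> bool) \<Rightarrow> bool \<Rightarrow> nat list \<Rightarrow> letter list" where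
  "build K st [] = []"
| "build K st (i # is) = (i, True, st \<noteq> snd (K i)) # build K (\<not> st) is"

lemma map_fst_build: "map fst (build K st xs) = xs"
  by (induction xs arbitrary: st) auto

lemma kf_build: "\<forall>i\<in>set xs. fst (K i) \<Longrightarrow> j \<in> set xs \<Longrightarrow> kf st (build K st xs) j = K j"
proof (induction xs arbitrary: st)
  case Nil then show ?case by simp
next
  case (Cons i xs)
  show ?case
  proof (cases "j = i")
    case True
    then show ?thesis using Cons.prems by (cases "K i") auto
  next
    case False
    then show ?thesis using Cons by auto
  qed
qed

lemma realize:
  assumes K: "K \<in> Keys n"
  shows "\<exists>w\<in>MonP n. kf False w = K"
proof -
  have KP: "K \<in> PiE {1..n} (\<lambda>_. UNIV)" using K by (simp add: Keys_def)
  have Kout: "K j = undefined" if "j \<notin> {1..n}" for j using KP that by (auto simp: PiE_def extensional_def)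
  show ?thesis
  proof (cases "\<exists>i\<in>{1..n}. fst (K i)")
    case False
    then have K0: "\<forall>i\<in>{1..n}. K i = (False, False)" using K by (auto simp: Keys_def)
    define w where "w = map ev0 [1..<n+1]"
    have "map fst w = [1..<n+1]" by (simp add: w_def ev0_def comp_def)
    then have "length w = n" "set (map fst w) = {1..n}"
      by (metis length_map length_upt diff_add_inverse2, metis set_upt atLeastLessThanSuc_atLeastAtMost Suc_eq_plus1)
    then have "w \<in> MonP n" by (simp add: MonP_def)
    moreover have "kf False w = K"
      using K0 Kout by (auto simp: w_def kf_ev0 fun_eq_iff)
    ultimately show ?thesis by blast
  next
    case True
    then obtain j0 where j0: "j0 \<in> {1..n}" "fst (K j0)" by blast
    define E0 where "E0 = {i\<in>{1..n}. K i = (False, False)}"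
    define E1 where "E1 = {i\<in>{1..n}. K i = (False, True)}"
    define Od where "Od = {i\<in>{1..n}. fst (K i)} - {j0}"
    define l0 where "l0 = sorted_list_of_set E0"
    define l1 where "l1 = sorted_list_of_set E1"
    define lo where "lo = sorted_list_of_set Od"
    have sl: "set l0 = E0" "set l1 = E1" "set lo = Od" "distinct l0" "distinct l1" "distinct lo"
      by (auto simp: l0_def l1_def lo_def E0_def E1_def Od_def)
    define w where "w = map ev0 l0 @ [(j0, True, snd (K j0))] @ map ev0 l1 @ build K True lo"
    have mf: "map fst w = l0 @ [j0] @ l1 @ lo"
      by (simp add: w_def map_fst_build comp_def ev0_def)
    have cover: "E0 \<union> {j0} \<union> E1 \<union> Od = {1..n}"
    proof -
      have "i \<in> E0 \<union> {j0} \<union> E1 \<union> Od" if "i \<in> {1..n}" for i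
        using that by (cases "K i") (auto simp: E0_def E1_def Od_def)
      moreover have "E0 \<union> {j0} \<union> E1 \<union> Od \<subseteq> {1..n}" using j0 by (auto simp: E0_def E1_def Od_def)
      ultimately show ?thesis by blast
    qed
    have dist: "distinct (map fst w)"
      unfolding mf using sl j0 by (auto simp: E0_def E1_def Od_def)
    have setw: "set (map fst w) = {1..n}" unfolding mf using sl cover by auto
    have "w \<in> MonP n"
      using setw distinct_card[OF dist] by (auto simp: MonP_def)
    moreover have "kf False w j = K j" for j
    proof (cases "j \<in> {1..n}")
      case False
      then show ?thesis using kf_undef[of j w False] setw Kout by auto
    next
      case True
      have KO: "\<forall>i\<in>set lo. fst (K i)" using sl by (auto simp: Od_def)
      have kf1: "kf False w j = (if j \<in> set l0 then (False, False) else
          if j = j0 then (True, snd (K j0)) else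
          if j \<in> set l1 then (False, True) else kf True (build K True lo) j)"
      proof -
        have "kf False w j = (if j \<in> set l0 then (False, False) else kf False ((j0, True, snd (K j0)) # (map ev0 l1 @ build K True lo)) j)"
          unfolding w_def by (subst kf_append) (simp add: kf_ev0 par_ev0)
        moreover have "kf True (map ev0 l1 @ build K True lo) j = (if j \<in> set l1 then (False, True) else kf True (build K True lo) j)"
          by (subst kf_append) (simp add: kf_ev0 par_ev0)
        ultimately show ?thesis by simp
      qed
      show ?thesis
      proof -
        have "j \<in> E0 \<union> {j0} \<union> E1 \<union> Od" unfolding cover by (rule True)
        then have "j \<in> E0 \<or> j = j0 \<or> j \<in> E1 \<or> j \<in> Od" by blast
        moreover have "j0 \<notin> E0" "j0 \<notin> E1" using j0 by (auto simp: E0_def E1_def)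
        moreover have "K j0 = (True, snd (K j0))" using j0 by (cases "K j0") auto
        moreover have "j \<in> Od \<Longrightarrow> j \<notin> E0 \<and> j \<notin> E1 \<and> j \<noteq> j0" by (auto simp: E0_def E1_def Od_def)
        moreover have "j \<in> E1 \<Longrightarrow> j \<notin> E0" by (auto simp: E0_def E1_def)
        ultimately show ?thesis unfolding kf1 using kf_build[OF KO, of j True] sl
          by (auto simp: E0_def E1_def)
      qed
    qed
    ultimately show ?thesis by blast
  qed
qed



lemma card_Keys: "card (Keys n) = 4 ^ n - 2 ^ n + 1"
proof -
  define P where "P = PiE {1..n} (\<lambda>_. (UNIV :: (bool \<times> bool) set))"
  define Q where "Q = PiE {1..n} (\<lambda>_. ({False} \<times> (UNIV :: bool set)))"
  define z where "z = (\<lambda>i\<in>{1..n}. (False, False))"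
  have zQ: "z \<in> Q" by (auto simp: z_def Q_def)
  have QP: "Q \<subseteq> P" by (auto simp: P_def Q_def PiE_def Pi_def)
  have eq: "Keys n = P - (Q - {z})"
  proof (intro set_eqI iffI)
    fix K assume K: "K \<in> Keys n"
    have KP: "K \<in> P" using K by (simp add: Keys_def P_def)
    have "K = z" if KQ: "K \<in> Q"
    proof -
      have "\<forall>i\<in>{1..n}. \<not> fst (K i)" using KQ by (auto simp: Q_def PiE_def Pi_def)
      then have "\<forall>i\<in>{1..n}. K i = (False, False)" using K by (auto simp: Keys_def)
      then show ?thesis using KP by (auto simp: z_def P_def PiE_def extensional_def fun_eq_iff)
    qed
    then show "K \<in> P - (Q - {z})" using KP by auto
  next
    fix K assume K: "K \<in> P - (Q - {z})"
    then have KP: "K \<in> P" by auto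
    show "K \<in> Keys n"
    proof (cases "\<exists>i\<in>{1..n}. fst (K i)")
      case True then show ?thesis using KP by (simp add: Keys_def P_def)
    next
      case False
      then have "K \<in> Q" using KP by (auto simp: P_def Q_def PiE_def Pi_def mem_Times_iff)
      then have "K = z" using K by auto
      then show ?thesis by (auto simp: Keys_def z_def PiE_def extensional_def)
    qed
  qed
  have cP: "card P = 4 ^ n" unfolding P_def by (simp add: card_PiE card_UNIV_bool)
  have cQ: "card Q = 2 ^ n" unfolding Q_def by (simp add: card_PiE card_UNIV_bool card_cartesian_product)
  have finQ: "finite Q" unfolding Q_def by (simp add: finite_PiE)
  have cQz: "card (Q - {z}) = 2 ^ n - 1" using zQ finQ cQ by simp
  have "card (Keys n) = 4 ^ n - (2 ^ n - 1)"
    unfolding eq using QP finQ cP cQz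
    by (subst card_Diff_subset) (auto simp: P_def finite_PiE)
  moreover have "(2::nat) ^ n \<le> 4 ^ n" by (simp add: power_mono)
  moreover have "(1::nat) \<le> 2 ^ n" by simp
  ultimately show ?thesis by linarith
qed

lemma finite_Keys: "finite (Keys n)"
  unfolding Keys_def by (rule finite_Int) (simp add: finite_PiE)

definition isoA :: "nat \<Rightarrow> (nat \<Rightarrow> bool \<times> bool) \<Rightarrow> nat \<Rightarrow> bool \<Rightarrow> complex^bool^bool" where
  "isoA n K i g = (if i \<in> {1..n} \<and> g = fst (K i)
      then (\<chi> a b. if a = snd (K i) \<and> b = (snd (K i) \<noteq> g) then 1 else 0) else 0)"

lemma isoA_graded: "graded_subst (isoA n K)"
  unfolding graded_subst_def isoA_def using single_in_Mgr zero_in_Mgr by auto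

lemma isoA_eval:
  assumes K: "K \<in> Keys n" and K': "K' \<in> Keys n"
  shows "Ev (isoA n K) n K' $ False $ parK n K = (if K' = K then 1 else 0)"
proof (cases "K' = K")
  case True
  then show ?thesis by (auto simp: Ev_def isoA_def intro!: prod.neutral)
next
  case False
  have KP: "K \<in> PiE {1..n} (\<lambda>_. UNIV)" "K' \<in> PiE {1..n} (\<lambda>_. UNIV)" using K K' by (auto simp: Keys_def)
  obtain i where i: "i \<in> {1..n}" "K' i \<noteq> K i"
  proof (rule ccontr)
    assume "\<not> thesis"
    with that have "\<forall>i\<in>{1..n}. K' i = K i" by blast
    then have "K' = K" using KP by (auto simp: PiE_def extensional_def fun_eq_iff)
    with False show False by simp
  qed
  have "isoA n K i (fst (K' i)) $ (snd (K' i) \<noteq> False) $ ((snd (K' i) \<noteq> False) \<noteq> fst (K' i)) = 0"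
    using i(2) by (cases "K i"; cases "K' i") (auto simp: isoA_def)
  then have "(\<Prod>i\<in>{1..n}. isoA n K i (fst (K' i)) $ (snd (K' i) \<noteq> False) $ ((snd (K' i) \<noteq> False) \<noteq> fst (K' i))) = 0"
    using i(1) by (intro prod_zero) auto
  then show ?thesis using False by (simp add: Ev_def)
qed

definition R :: "nat \<Rightarrow> (letter list \<Rightarrow> rat) \<Rightarrow> (nat \<Rightarrow> bool \<times> bool) \<Rightarrow> rat" where
  "R n f K = (\<Sum>w\<in>{w\<in>MonP n. kf False w = K}. f w)"

lemma finite_MonP: "finite (MonP n)"
proof -
  have "MonP n \<subseteq> {w. set w \<subseteq> {1..n} \<times> UNIV \<and> length w = n}"
  proof
    fix w assume w: "w \<in> MonP n"
    have "x \<in> {1..n} \<times> UNIV" if "x \<in> set w" for x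
    proof -
      have "fst x \<in> set (map fst w)" using that by simp
      then have "fst x \<in> {1..n}" using w by (simp add: MonP_def)
      then show ?thesis by (cases x) auto
    qed
    then show "w \<in> {w. set w \<subseteq> {1..n} \<times> UNIV \<and> length w = n}" using w by (auto simp: MonP_def)
  qed
  moreover have "finite {w. set w \<subseteq> ({1..n} \<times> (UNIV :: (bool \<times> bool) set)) \<and> length w = n}"
    by (rule finite_lists_length_eq) simp
  ultimately show ?thesis by (rule finite_subset)
qed

lemma R_out: "K \<notin> Keys n \<Longrightarrow> R n f K = 0"
  unfolding R_def using key_in by (intro sum.neutral) auto

lemma eval_poly_R:
  assumes A: "graded_subst A"
  shows "eval_poly n A f $ a $ b = (\<Sum>K\<in>Keys n. of_rat (R n f K) * Ev A n K $ a $ b)"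
proof -
  have "eval_poly n A f $ a $ b = (\<Sum>w\<in>MonP n. of_rat (f w) * eval_word A w $ a $ b)"
    by (simp add: eval_poly_def)
  also have "\<dots> = (\<Sum>w\<in>MonP n. of_rat (f w) * Ev A n (kf False w) $ a $ b)"
    using eval_key[OF A] by simp
  also have "\<dots> = (\<Sum>K\<in>Keys n. \<Sum>w\<in>{w\<in>MonP n. kf False w = K}. of_rat (f w) * Ev A n (kf False w) $ a $ b)"
    by (rule sum.group[symmetric]) (use finite_MonP finite_Keys key_in in auto)
  also have "\<dots> = (\<Sum>K\<in>Keys n. of_rat (R n f K) * Ev A n K $ a $ b)"
    by (rule sum.cong) (auto simp: R_def of_rat_sum sum_distrib_right)
  finally show ?thesis .
qed

lemma ident_iff: "is_identity n f \<longleftrightarrow> (\<forall>K\<in>Keys n. R n f K = 0)"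
proof
  assume H: "\<forall>K\<in>Keys n. R n f K = 0"
  show "is_identity n f" unfolding is_identity_def
    using eval_poly_R H by (auto simp: vec_eq_iff)
next
  assume I: "is_identity n f"
  show "\<forall>K\<in>Keys n. R n f K = 0"
  proof
    fix K assume K: "K \<in> Keys n"
    have "0 = eval_poly n (isoA n K) f $ False $ parK n K"
      using I isoA_graded unfolding is_identity_def by simp
    also have "\<dots> = (\<Sum>K'\<in>Keys n. of_rat (R n f K') * (if K' = K then 1 else 0))"
      using eval_poly_R[OF isoA_graded] isoA_eval[OF K] by simp
    also have "\<dots> = of_rat (R n f K)"
      using K finite_Keys by (simp add: if_distrib sum.delta' cong: if_cong)
    finally show "R n f K = 0" by simp
  qed
qed


lemma vs_fun: "Vector_Spaces.vector_space (\<lambda>(c::rat) (f::'a\<Rightarrow>rat) x. c * f x)"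
  by unfold_locales (auto simp: fun_eq_iff algebra_simps)

lemma sum_fun_apply: "finite A \<Longrightarrow> (\<Sum>y\<in>A. (g y :: 'a \<Rightarrow> rat)) x = (\<Sum>y\<in>A. g y x)"
  by (induction A rule: finite_induct) auto

lemma lin_dep:
  fixes v :: "nat \<Rightarrow> 'a \<Rightarrow> rat" and T :: "'a set"
  assumes fin: "finite T" and ck: "card T < k" and supp: "\<And>j x. j < k \<Longrightarrow> x \<notin> T \<Longrightarrow> v j x = 0"
  shows "\<exists>c. (\<exists>j<k. c j \<noteq> 0) \<and> (\<forall>x. (\<Sum>j<k. c j * v j x) = 0)"
proof (cases "inj_on v {..<k}")
  case False
  then obtain i j where ij: "i < k" "j < k" "i \<noteq> j" "v i = v j" unfolding inj_on_def by auto
  define c where "c = (\<lambda>m. if m = i then 1 else if m = j then -1 else (0::rat))"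
  have "(\<Sum>m<k. c m * v m x) = 0" for x
  proof -
    have "(\<Sum>m<k. c m * v m x) = (\<Sum>m\<in>{i,j}. c m * v m x)"
      by (rule sum.mono_neutral_right) (use ij in \<open>auto simp: c_def\<close>)
    also have "\<dots> = 0" using ij by (simp add: c_def)
    finally show ?thesis .
  qed
  moreover have "c i \<noteq> 0" by (simp add: c_def)
  ultimately show ?thesis using ij by blast
next
  case True
  interpret V: vector_space "\<lambda>(c::rat) (f::'a\<Rightarrow>rat) x. c * f x" by (rule vs_fun)
  define B where "B = (\<lambda>t x. if x = t then 1 else (0::rat)) ` T"
  have cardV: "card (v ` {..<k}) = k" using True by (simp add: card_image)
  have spanV: "v ` {..<k} \<subseteq> V.span B"
  proof
    fix f assume "f \<in> v ` {..<k}"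
    then obtain j where j: "j < k" "f = v j" by auto
    have "f = (\<Sum>t\<in>T. (\<lambda>x. v j t * (if x = t then 1 else 0)))"
    proof (rule ext)
      fix x
      have "(\<Sum>t\<in>T. v j t * (if x = t then 1 else 0)) = (\<Sum>t\<in>T. if x = t then v j t else 0)"
        by (rule sum.cong) auto
      also have "\<dots> = v j x" using fin supp[OF j(1)] by (simp add: sum.delta)
      finally show "f x = (\<Sum>t\<in>T. (\<lambda>x. v j t * (if x = t then 1 else 0))) x"
        by (simp add: sum_fun_apply fin j)
    qed
    also have "\<dots> \<in> V.span B"
      by (intro V.span_sum V.span_scale V.span_base) (auto simp: B_def)
    finally show "f \<in> V.span B" .
  qed
  have "V.dependent (v ` {..<k})"
  proof (rule ccontr)
    assume ind: "\<not> V.dependent (v ` {..<k})"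
    have "card (v ` {..<k}) \<le> card B"
      using V.independent_span_bound[OF _ ind spanV] fin by (auto simp: B_def)
    also have "\<dots> \<le> card T" unfolding B_def by (rule card_image_le[OF fin])
    finally show False using cardV ck by simp
  qed
  then obtain t u where tu: "finite t" "t \<subseteq> v ` {..<k}"
    "(\<Sum>y\<in>t. (\<lambda>x. u y * y x)) = 0" "\<exists>y\<in>t. u y \<noteq> 0"
    unfolding V.dependent_explicit by blast
  define c where "c = (\<lambda>j. if v j \<in> t then u (v j) else 0)"
  have "(\<Sum>j<k. c j * v j x) = 0" for x
  proof -
    have "(\<Sum>j<k. c j * v j x) = (\<Sum>j\<in>{j\<in>{..<k}. v j \<in> t}. u (v j) * v j x)"
      by (rule sum.mono_neutral_cong_right) (auto simp: c_def)
    also have "\<dots> = (\<Sum>y\<in>v ` {j\<in>{..<k}. v j \<in> t}. u y * y x)"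
      by (rule sum.reindex[symmetric, unfolded comp_def]) (rule inj_on_subset[OF True], auto)
    also have "v ` {j\<in>{..<k}. v j \<in> t} = t" using tu(2) by auto
    also have "(\<Sum>y\<in>t. u y * y x) = (\<Sum>y\<in>t. (\<lambda>x. u y * y x)) x"
      by (simp add: sum_fun_apply tu(1))
    also have "\<dots> = 0" using tu(3) by simp
    finally show ?thesis .
  qed
  moreover obtain y where "y \<in> t" "u y \<noteq> 0" using tu(4) by blast
  moreover then obtain j where "j < k" "v j = y" using tu(2) by auto
  ultimately show ?thesis by (intro exI[of _ c]) (auto simp: c_def)
qed

lemma R_lin: "R n (\<lambda>w. \<Sum>j<k. c j * (fs ! j) w) K = (\<Sum>j<k. c j * R n (fs ! j) K)"
  unfolding R_def by (simp add: sum_distrib_left sum.swap[of _ "{..<k}"])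

lemma upper:
  assumes ind: "indep_mod_id n fs"
  shows "length fs \<le> card (Keys n)"
proof (rule ccontr)
  assume "\<not> length fs \<le> card (Keys n)"
  then have lt: "card (Keys n) < length fs" by simp
  obtain c where c: "\<exists>j<length fs. c j \<noteq> 0" "\<forall>K. (\<Sum>j<length fs. c j * R n (fs ! j) K) = 0"
    using lin_dep[OF finite_Keys lt, of "\<lambda>j. R n (fs ! j)"] R_out by blast
  have "is_identity n (\<lambda>w. \<Sum>j<length fs. c j * (fs ! j) w)"
    unfolding ident_iff R_lin using c(2) by simp
  then have "\<forall>j<length fs. c j = 0" using ind unfolding indep_mod_id_def by blast
  with c(1) show False by blast
qed

lemma lower: "\<exists>fs. length fs = card (Keys n) \<and> set fs \<subseteq> PG n \<and> indep_mod_id n fs"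
proof -
  obtain xs where xs: "set xs = Keys n" "distinct xs" using finite_distinct_list[OF finite_Keys[of n]] by (elim exE conjE)
  define wd where "wd K = (SOME w. w \<in> MonP n \<and> kf False w = K)" for K
  have wd: "wd K \<in> MonP n \<and> kf False (wd K) = K" if "K \<in> Keys n" for K
  proof -
    have "\<exists>w. w \<in> MonP n \<and> kf False w = K" using realize[OF that] by blast
    then show ?thesis unfolding wd_def by (rule someI_ex)
  qed
  define fs where "fs = map (\<lambda>K w. if w = wd K then (1::rat) else 0) xs"
  have len: "length fs = card (Keys n)" using xs by (simp add: fs_def distinct_card[symmetric])
  have PG: "set fs \<subseteq> PG n"
  proof
    fix f assume "f \<in> set fs"
    then obtain K where K: "K \<in> Keys n" "f = (\<lambda>w. if w = wd K then (1::rat) else 0)"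
      using xs(1) by (auto simp: fs_def)
    show "f \<in> PG n" using wd[OF K(1)] unfolding PG_def K(2) by auto
  qed
  have ind: "indep_mod_id n fs" unfolding indep_mod_id_def
  proof (intro allI impI)
    fix c :: "nat \<Rightarrow> rat" and j
    assume I: "is_identity n (\<lambda>w. \<Sum>j<length fs. c j * (fs ! j) w)" and j: "j < length fs"
    have jx: "j < length xs" using j by (simp add: fs_def)
    have K: "xs ! j \<in> Keys n" unfolding xs(1)[symmetric] by (rule nth_mem[OF jx])
    have "0 = R n (\<lambda>w. \<Sum>j<length fs. c j * (fs ! j) w) (xs ! j)"
      using I K unfolding ident_iff by simp
    also have "\<dots> = (\<Sum>m<length fs. c m * R n (fs ! m) (xs ! j))" by (rule R_lin)
    also have "\<dots> = (\<Sum>m<length fs. if m = j then c m else 0)"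
    proof (rule sum.cong[OF refl])
      fix m assume m: "m \<in> {..<length fs}"
      then have mx: "m < length xs" by (simp add: fs_def)
      have Km: "xs ! m \<in> Keys n" unfolding xs(1)[symmetric] by (rule nth_mem[OF mx])
      have "R n (fs ! m) (xs ! j) = (\<Sum>w\<in>{w\<in>MonP n. kf False w = xs ! j}. if w = wd (xs ! m) then 1 else 0)"
        using mx by (simp add: R_def fs_def)
      also have "\<dots> = (if m = j then 1 else 0)"
      proof (cases "m = j")
        case True
        then show ?thesis using wd[OF Km] finite_MonP by (simp add: sum.delta')
      next
        case False
        then have "xs ! m \<noteq> xs ! j" using xs(2) mx jx by (simp add: nth_eq_iff_index_eq)
        then show ?thesis using wd[OF Km] False by (auto intro!: sum.neutral)
      qed
      finally show "c m * R n (fs ! m) (xs ! j) = (if m = j then c m else 0)" by simp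
    qed
    also have "\<dots> = c j" using j by (simp add: sum.delta')
    finally show "c j = 0" by simp
  qed
  show ?thesis using len PG ind by blast
qed

lemma codim_eq: "codimG n = card (Keys n)"
  unfolding codimG_def
proof (rule Greatest_equality)
  show "\<exists>fs. length fs = card (Keys n) \<and> set fs \<subseteq> PG n \<and> indep_mod_id n fs" by (rule lower)
next
  fix y assume "\<exists>fs. length fs = y \<and> set fs \<subseteq> PG n \<and> indep_mod_id n fs"
  then show "y \<le> card (Keys n)" using upper by blast
qed

theorem mainTheorem18:
  shows "(\<forall>n::nat. n \<ge> 1 \<longrightarrow> codimG n = 4 ^ n - 2 ^ n + 1)
         \<and> (\<lambda>n. real (codimG n)) \<sim>[at_top] (\<lambda>n. 2 ^ (2 * n))"
proof
  show "\<forall>n::nat. n \<ge> 1 \<longrightarrow> codimG n = 4 ^ n - 2 ^ n + 1"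
    by (simp add: codim_eq card_Keys)
  have r: "real (codimG n) = 4 ^ n - 2 ^ n + 1" for n
  proof -
    have "(2::nat) ^ n \<le> 4 ^ n" by (simp add: power_mono)
    then show ?thesis by (simp add: codim_eq card_Keys of_nat_diff)
  qed
  have p: "(2::real) ^ (2 * n) = 4 ^ n" for n by (simp add: power_mult)
  have "(\<lambda>n::nat. (4::real) ^ n - 2 ^ n + 1) \<sim>[at_top] (\<lambda>n. 4 ^ n)"
  proof (rule asymp_equivI')
    have eq: "((4::real) ^ n - 2 ^ n + 1) / 4 ^ n = 1 - (1/2) ^ n + (1/4) ^ n" for n :: nat
    proof -
      define a :: real where "a = 2 ^ n"
      have a: "a > 0" by (simp add: a_def)
      have h4: "(4::real) ^ n = a * a" unfolding a_def by (simp flip: power_mult_distrib)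
      have h2: "(1/2::real) ^ n = 1 / a" unfolding a_def by (simp add: power_divide)
      have h14: "(1/4::real) ^ n = 1 / (a * a)" using h4 by (simp add: power_divide)
      show ?thesis unfolding h4 h2 h14 a_def[symmetric] using a by (simp add: field_simps)
    qed
    have "(\<lambda>n::nat. 1 - (1/2::real) ^ n + (1/4) ^ n) \<longlonglongrightarrow> 1 - 0 + 0"
      by (intro tendsto_intros) auto
    then show "(\<lambda>n::nat. ((4::real) ^ n - 2 ^ n + 1) / 4 ^ n) \<longlonglongrightarrow> 1"
      by (simp add: eq)
  qed
  then have "(\<lambda>n::nat. (4::real) ^ n - 2 ^ n + 1) \<sim>[at_top] (\<lambda>n. 2 ^ (2 * n))"
    by (simp only: p)
  then show "(\<lambda>n. real (codimG n)) \<sim>[at_top] (\<lambda>n. 2 ^ (2 * n))"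
    by (simp add: r)
qed


end
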